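(* There exists a constant $b>0$ such that for every $n,m\in\mathbb{N}^+$ and every sequence of samples $(x_1,y_1),\dots,(x_m,y_m)$ with $x_j\in\mathcal{B}^n$, $y_j\in\mathcal{B}$, which is consistent with some function $\mathcal{B}^n\to\mathcal{B}$ (i.e. $x_j=x_k$ implies $y_j=y_k$), there exists a Boolean circuit on $n$ inputs of size at most $bm$ that outputs $y_j$ on input $x_j$ for every $j=1,\dots,m$.
   Context: Let $\mathcal{B}=\{0,1\}$. A Boolean circuit on $n$ inputs is a DAG with a unique sink (output) whose sources are labelled by input indices in $\{1,\dots,n\}$ and whose other vertices (gates) are labelled AND, OR (two incoming edges) or NOT (one incoming edge); it computes a function $\mathcal{B}^n\to\mathcal{B}$ in the usual way; its size is its number of vertices. *)

theory Defs
  imports Complex_Main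
begin

text \<open>A Boolean circuit is represented as a DAG listed in topological order:
  vertex i is the i-th list element; its incoming edges come from the
  (strictly earlier) vertices named in its label.\<close>

datatype gate = Inp nat | AndG nat nat | OrG nat nat | NotG nat

fun gate_preds :: "gate \<Rightarrow> nat set" where
  "gate_preds (Inp k) = {}"
| "gate_preds (AndG a b) = {a, b}"
| "gate_preds (OrG a b) = {a, b}"
| "gate_preds (NotG a) = {a}"

fun gate_ok :: "nat \<Rightarrow> nat \<Rightarrow> gate \<Rightarrow> bool" where
  "gate_ok n i (Inp k) = (k < n)"
| "gate_ok n i (AndG a b) = (a < i \<and> b < i \<and> a \<noteq> b)"
| "gate_ok n i (OrG a b) = (a < i \<and> b < i \<and> a \<noteq> b)"
| "gate_ok n i (NotG a) = (a < i)"

text \<open>Well-formed circuit on n inputs: nonempty, edges point backwards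
  (acyclic), AND/OR have two distinct in-neighbours, NOT one, sources are
  labelled with input indices, and the last vertex is the unique sink
  (every other vertex has an outgoing edge).\<close>
definition wf_circuit :: "nat \<Rightarrow> gate list \<Rightarrow> bool" where
  "wf_circuit n c \<longleftrightarrow> c \<noteq> [] \<and>
     (\<forall>i < length c. gate_ok n i (c ! i)) \<and>
     (\<forall>i < length c - 1. \<exists>j < length c. i \<in> gate_preds (c ! j))"

fun gate_val :: "bool list \<Rightarrow> bool list \<Rightarrow> gate \<Rightarrow> bool" where
  "gate_val x vs (Inp k) = x ! k"
| "gate_val x vs (AndG a b) = (vs ! a \<and> vs ! b)"
| "gate_val x vs (OrG a b) = (vs ! a \<or> vs ! b)"
| "gate_val x vs (NotG a) = (\<not> vs ! a)"

definition circuit_eval :: "gate list \<Rightarrow> bool list \<Rightarrow> bool" where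
  "circuit_eval c x = last (foldl (\<lambda>vs g. vs @ [gate_val x vs g]) [] c)"

definition circuit_size :: "gate list \<Rightarrow> nat" where
  "circuit_size c = length c"

end

theory Submission
  imports Defs
begin

definition stp :: "bool list \<Rightarrow> bool list \<Rightarrow> gate \<Rightarrow> bool list" where
  "stp x vs g = vs @ [gate_val x vs g]"

lemma eval_stp: "circuit_eval c x = last (foldl (stp x) [] c)"
  unfolding circuit_eval_def stp_def by simp

lemma len_fold: "length (foldl (stp x) vs c) = length vs + length c"
  by (induction c arbitrary: vs) (auto simp: stp_def)

fun shiftg :: "nat \<Rightarrow> gate \<Rightarrow> gate" where
  "shiftg d (Inp k) = Inp k"
| "shiftg d (AndG a b) = AndG (a+d) (b+d)"
| "shiftg d (OrG a b) = OrG (a+d) (b+d)"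
| "shiftg d (NotG a) = NotG (a+d)"

lemma gate_ok_shift: "gate_ok n i g \<Longrightarrow> gate_ok n (i+d) (shiftg d g)"
  by (cases g) auto

lemma preds_shift: "gate_preds (shiftg d g) = (\<lambda>a. a+d) ` gate_preds g"
  by (cases g) auto

lemma gate_val_shift:
  assumes "gate_ok n (length V2) g" "length V1 = d"
  shows "gate_val x (V1 @ V2) (shiftg d g) = gate_val x V2 g"
  using assms by (cases g) (auto simp: nth_append)

lemma vals_shift:
  assumes "\<forall>i<length c2. gate_ok n i (c2 ! i)"
  shows "foldl (stp x) [] (c1 @ map (shiftg (length c1)) c2)
       = foldl (stp x) [] c1 @ foldl (stp x) [] c2"
  using assms
proof (induction c2 rule: rev_induct)
  case Nil
  then show ?case by simp
next
  case (snoc g c2)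
  have ok: "\<forall>i<length c2. gate_ok n i (c2 ! i)"
  proof (intro allI impI)
    fix i assume "i < length c2"
    then show "gate_ok n i (c2 ! i)" using snoc.prems[rule_format, of i] by (simp add: nth_append)
  qed
  have g: "gate_ok n (length c2) g"
    using snoc.prems[rule_format, of "length c2"] by simp
  have IH: "foldl (stp x) [] (c1 @ map (shiftg (length c1)) c2)
       = foldl (stp x) [] c1 @ foldl (stp x) [] c2" using snoc.IH ok by simp
  have l1: "length (foldl (stp x) [] c1) = length c1" by (simp add: len_fold)
  have l2: "length (foldl (stp x) [] c2) = length c2" by (simp add: len_fold)
  have "foldl (stp x) [] (c1 @ map (shiftg (length c1)) (c2 @ [g]))
      = stp x (foldl (stp x) [] (c1 @ map (shiftg (length c1)) c2)) (shiftg (length c1) g)"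
    by simp
  also have "\<dots> = stp x (foldl (stp x) [] c1 @ foldl (stp x) [] c2) (shiftg (length c1) g)"
    using IH by simp
  also have "\<dots> = foldl (stp x) [] c1 @ stp x (foldl (stp x) [] c2) g"
    using gate_val_shift[OF g[folded l2] l1, of x] by (simp add: stp_def)
  finally show ?case by simp
qed

definition constc :: "bool \<Rightarrow> gate list" where
  "constc b = [Inp 0, NotG 0, (if b then OrG 0 1 else AndG 0 1)]"

lemma constc_ok:
  assumes "n > 0"
  shows "wf_circuit n (constc b) \<and> length (constc b) = 3 \<and> circuit_eval (constc b) x = b"
proof -
  have "wf_circuit n (constc b)"
    unfolding wf_circuit_def constc_def using assms
    apply (cases b)
     apply (auto simp: less_Suc_eq nth_Cons')
    done
  moreover have "circuit_eval (constc b) x = b"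
    unfolding circuit_eval_def constc_def by (cases b) auto
  ultimately show ?thesis by (simp add: constc_def)
qed

definition node :: "nat \<Rightarrow> gate list \<Rightarrow> gate list \<Rightarrow> gate list" where
  "node i c1 c0 = (let L1 = length c1; p = L1 + length c0 in
     c1 @ map (shiftg L1) c0 @
     [Inp i, NotG p, AndG p (L1 - 1), AndG (p+1) (p - 1), OrG (p+2) (p+3)])"

lemma node_len: "length (node i c1 c0) = length c1 + length c0 + 5"
  by (simp add: node_def Let_def)

lemma tail_eval:
  assumes "length W = p" "q1 < p" "q0 < p"
  shows "last (foldl (stp x) W [Inp i, NotG p, AndG p q1, AndG (p+1) q0, OrG (p+2) (p+3)])
    = (if x ! i then W ! q1 else W ! q0)"
  using assms by (simp add: stp_def nth_append)

lemma node_eval: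
  assumes "wf_circuit n c1" "wf_circuit n c0"
  shows "circuit_eval (node i c1 c0) x =
     (if x ! i then circuit_eval c1 x else circuit_eval c0 x)"
proof -
  let ?L1 = "length c1" and ?L0 = "length c0"
  define V1 where "V1 = foldl (stp x) [] c1"
  define V0 where "V0 = foldl (stp x) [] c0"
  have l1: "length V1 = ?L1" and l0: "length V0 = ?L0"
    by (simp_all add: V1_def V0_def len_fold)
  have ne: "?L1 > 0" "?L0 > 0" using assms by (auto simp: wf_circuit_def)
  have ok0: "\<forall>i<length c0. gate_ok n i (c0 ! i)" using assms by (simp add: wf_circuit_def)
  have F: "foldl (stp x) [] (node i c1 c0) =
        foldl (stp x) (V1 @ V0) [Inp i, NotG (?L1 + ?L0), AndG (?L1 + ?L0) (?L1 - 1),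
           AndG (?L1 + ?L0 + 1) (?L1 + ?L0 - 1), OrG (?L1 + ?L0 + 2) (?L1 + ?L0 + 3)]"
    unfolding node_def Let_def V1_def V0_def vals_shift[OF ok0, symmetric]
    by (simp only: foldl_append append_assoc[symmetric])
  moreover have "circuit_eval c1 x = V1 ! (?L1 - 1)"
  proof -
    have "V1 \<noteq> []" using ne l1 by auto
    moreover have "circuit_eval c1 x = last V1" by (simp add: eval_stp V1_def)
    ultimately show ?thesis using l1 by (simp add: last_conv_nth)
  qed
  moreover have "circuit_eval c0 x = V0 ! (?L0 - 1)"
  proof -
    have "V0 \<noteq> []" using ne l0 by auto
    moreover have "circuit_eval c0 x = last V0" by (simp add: eval_stp V0_def)
    ultimately show ?thesis using l0 by (simp add: last_conv_nth)
  qed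
  moreover have "V1 ! (?L1 - 1) = (V1 @ V0) ! (?L1 - 1)" using ne l1 by (simp add: nth_append)
  moreover have "V0 ! (?L0 - 1) = (V1 @ V0) ! (?L1 + ?L0 - 1)"
  proof -
    have "\<not> ?L1 + ?L0 - 1 < ?L1" "?L1 + ?L0 - 1 - ?L1 = ?L0 - 1" using ne by arith+
    then show ?thesis using l1 by (simp add: nth_append)
  qed
  moreover have "circuit_eval (node i c1 c0) x = (if x ! i then (V1 @ V0) ! (?L1 - 1) else (V1 @ V0) ! (?L1 + ?L0 - 1))"
  proof -
    have "?L1 - 1 < ?L1 + ?L0" "?L1 + ?L0 - 1 < ?L1 + ?L0" using ne by arith+
    then show ?thesis unfolding eval_stp F using l1 l0 by (intro tail_eval) auto
  qed
  ultimately show ?thesis by simp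
qed

lemma node_wf:
  assumes "wf_circuit n c1" "wf_circuit n c0" "i < n"
  shows "wf_circuit n (node i c1 c0)"
proof -
  let ?L1 = "length c1" and ?L0 = "length c0"
  let ?p = "?L1 + ?L0"
  let ?c = "node i c1 c0"
  have ne: "?L1 > 0" "?L0 > 0" using assms by (auto simp: wf_circuit_def)
  have ok1: "\<forall>i<length c1. gate_ok n i (c1 ! i)"
    and ok0: "\<forall>i<length c0. gate_ok n i (c0 ! i)"
    and s1: "\<forall>i<length c1 - 1. \<exists>j<length c1. i \<in> gate_preds (c1 ! j)"
    and s0: "\<forall>i<length c0 - 1. \<exists>j<length c0. i \<in> gate_preds (c0 ! j)"
    using assms by (auto simp: wf_circuit_def)
  have len: "length ?c = ?p + 5" by (simp add: node_len)
  have A: "k < ?L1 \<Longrightarrow> ?c ! k = c1 ! k" for k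
    by (simp add: node_def Let_def nth_append)
  have B: "?L1 \<le> k \<Longrightarrow> k < ?p \<Longrightarrow> ?c ! k = shiftg ?L1 (c0 ! (k - ?L1))" for k
  proof -
    assume h: "?L1 \<le> k" "k < ?p"
    then have "k - ?L1 < ?L0" by arith
    then show ?thesis using h by (simp add: node_def Let_def nth_append)
  qed
  have T: "?c ! ?p = Inp i" "?c ! (?p+1) = NotG ?p" "?c ! (?p+2) = AndG ?p (?L1 - 1)"
     "?c ! (?p+3) = AndG (?p+1) (?p - 1)" "?c ! (?p+4) = OrG (?p+2) (?p+3)"
    by (simp_all add: node_def Let_def nth_append)
  have gok: "gate_ok n k (?c ! k)" if kl: "k < length ?c" for k
  proof -
    consider "k < ?L1" | "?L1 \<le> k" "k < ?p" | "k = ?p" | "k = ?p+1" | "k = ?p+2"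
      | "k = ?p+3" | "k = ?p+4" using kl len by linarith
    then show ?thesis
    proof cases
      case 1 then show ?thesis using A ok1 by simp
    next
      case 2
      then have "k - ?L1 < ?L0" by arith
      then have "gate_ok n (k - ?L1 + ?L1) (shiftg ?L1 (c0 ! (k - ?L1)))"
        using gate_ok_shift ok0 by simp
      then show ?thesis using 2 B by simp
    next
      case 3 then show ?thesis using T(1) assms(3) by simp
    next
      case 4 then show ?thesis using T(2) by simp
    next
      case 5
      have "?L1 - 1 < ?p" "?p \<noteq> ?L1 - 1" using ne by arith+
      then show ?thesis using T(3) 5 by simp
    next
      case 6
      have "?p - 1 < ?p + 3" "?p + 1 \<noteq> ?p - 1" using ne by arith+
      then show ?thesis using T(4) 6 by simp
    next
      case 7 then show ?thesis using T(5) by simp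
    qed
  qed
  have sink: "\<exists>j<length ?c. k \<in> gate_preds (?c ! j)" if kl: "k < length ?c - 1" for k
  proof -
    consider "k < ?L1 - 1" | "k = ?L1 - 1" | "?L1 \<le> k" "k < ?p - 1" | "k = ?p - 1"
      | "k = ?p" | "k = ?p+1" | "k = ?p+2" | "k = ?p+3" using kl len ne by linarith
    then show ?thesis
    proof cases
      case 1
      then obtain j where "j < ?L1" "k \<in> gate_preds (c1 ! j)" using s1 by blast
      then show ?thesis using A len by (intro exI[of _ j]) auto
    next
      case 2 then show ?thesis using T len by (intro exI[of _ "?p+2"]) auto
    next
      case 3
      then have "k - ?L1 < ?L0 - 1" by arith
      then obtain j where j: "j < ?L0" "k - ?L1 \<in> gate_preds (c0 ! j)" using s0 by blast
      have "k \<in> gate_preds (?c ! (j + ?L1))"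
        using B[of "j + ?L1"] j 3 by (auto simp: preds_shift image_iff intro!: bexI[of _ "k - ?L1"])
      then show ?thesis using j len by (intro exI[of _ "j + ?L1"]) auto
    next
      case 4 then show ?thesis using T len by (intro exI[of _ "?p+3"]) auto
    next
      case 5 then show ?thesis using T len by (intro exI[of _ "?p+1"]) auto
    next
      case 6 then show ?thesis using T len by (intro exI[of _ "?p+3"]) auto
    next
      case 7 then show ?thesis using T len by (intro exI[of _ "?p+4"]) auto
    next
      case 8 then show ?thesis using T len by (intro exI[of _ "?p+4"]) auto
    qed
  qed
  show ?thesis unfolding wf_circuit_def using gok sink len by auto
qed


lemma build:
  assumes "finite S" "S \<noteq> {}" "\<forall>x\<in>S. length x = n" "n > 0"
  shows "\<exists>c. wf_circuit n c \<and> length c + 5 \<le> 8 * card S \<and> (\<forall>x\<in>S. circuit_eval c x = f x)"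
  using assms
proof (induction "card S" arbitrary: S rule: less_induct)
  case less
  show ?case
  proof (cases "\<forall>x\<in>S. \<forall>y\<in>S. f x = f y")
    case True
    obtain x0 where x0: "x0 \<in> S" using less.prems by blast
    have "card S \<ge> 1" using less.prems by (simp add: Suc_leI card_gt_0_iff)
    have C: "wf_circuit n (constc (f x0))" "length (constc (f x0)) = 3"
      "\<And>x. circuit_eval (constc (f x0)) x = f x0"
      using constc_ok[OF less.prems(4)] by blast+
    show ?thesis
    proof (intro exI[of _ "constc (f x0)"] conjI ballI)
      show "wf_circuit n (constc (f x0))" by (rule C(1))
      show "length (constc (f x0)) + 5 \<le> 8 * card S" using C(2) \<open>card S \<ge> 1\<close> by simp
      fix x assume "x \<in> S"
      then show "circuit_eval (constc (f x0)) x = f x" using C(3) True x0 by metis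
    qed
  next
    case False
    then obtain x y where xy: "x \<in> S" "y \<in> S" "f x \<noteq> f y" by blast
    then have "x \<noteq> y" by auto
    moreover have "length x = length y" using xy less.prems(3) by auto
    ultimately have "\<not> (\<forall>i<length x. x ! i = y ! i)"
      using nth_equalityI[of x y] by auto
    then obtain i where i: "i < length x" "x ! i \<noteq> y ! i" by blast
    have il: "i < n" using i xy less.prems(3) by auto
    define S1 where "S1 = {z\<in>S. z ! i}"
    define S0 where "S0 = {z\<in>S. \<not> z ! i}"
    have fin: "finite S1" "finite S0" using less.prems(1) by (auto simp: S1_def S0_def)
    have ne: "S1 \<noteq> {}" "S0 \<noteq> {}" using i xy by (auto simp: S1_def S0_def)
    have sub: "S1 \<subset> S" "S0 \<subset> S" using i xy by (auto simp: S1_def S0_def)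
    have cl: "card S1 < card S" "card S0 < card S"
      using sub less.prems(1) by (auto intro: psubset_card_mono)
    have cs: "card S1 + card S0 = card S"
    proof -
      have "S = S1 \<union> S0" "S1 \<inter> S0 = {}" by (auto simp: S1_def S0_def)
      then show ?thesis using fin card_Un_disjoint by metis
    qed
    have l1: "\<forall>x\<in>S1. length x = n" and l0: "\<forall>x\<in>S0. length x = n"
      using less.prems(3) by (auto simp: S1_def S0_def)
    obtain c1 where c1: "wf_circuit n c1" "length c1 + 5 \<le> 8 * card S1"
        "\<forall>x\<in>S1. circuit_eval c1 x = f x"
      using less.hyps[OF cl(1) fin(1) ne(1) l1 less.prems(4)] by blast
    obtain c0 where c0: "wf_circuit n c0" "length c0 + 5 \<le> 8 * card S0"
        "\<forall>x\<in>S0. circuit_eval c0 x = f x"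
      using less.hyps[OF cl(2) fin(2) ne(2) l0 less.prems(4)] by blast
    show ?thesis
    proof (intro exI[of _ "node i c1 c0"] conjI ballI)
      show "wf_circuit n (node i c1 c0)" using node_wf c1 c0 il by blast
      show "length (node i c1 c0) + 5 \<le> 8 * card S" using c1 c0 cs by (simp add: node_len)
      fix z assume "z \<in> S"
      then show "circuit_eval (node i c1 c0) z = f z"
      proof (cases "z ! i")
        case True
        then have "z \<in> S1" using \<open>z \<in> S\<close> by (simp add: S1_def)
        then show ?thesis using node_eval[OF c1(1) c0(1), of i z] c1(3) True by simp
      next
        case False
        then have "z \<in> S0" using \<open>z \<in> S\<close> by (simp add: S0_def)
        then show ?thesis using node_eval[OF c1(1) c0(1), of i z] c0(3) False by simp
      qed
    qed
  qed
qed

theorem mainTheorem19: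
  shows "\<exists>b::real. b > 0 \<and>
    (\<forall>n m :: nat. \<forall>xs :: nat \<Rightarrow> bool list. \<forall>ys :: nat \<Rightarrow> bool.
       n > 0 \<longrightarrow> m > 0 \<longrightarrow>
       (\<forall>j < m. length (xs j) = n) \<longrightarrow>
       (\<forall>j < m. \<forall>k < m. xs j = xs k \<longrightarrow> ys j = ys k) \<longrightarrow>
       (\<exists>c. wf_circuit n c \<and> real (circuit_size c) \<le> b * real m \<and>
            (\<forall>j < m. circuit_eval c (xs j) = ys j)))"
proof (intro exI[of _ 8] conjI allI impI)
  fix n m :: nat and xs :: "nat \<Rightarrow> bool list" and ys :: "nat \<Rightarrow> bool"
  assume n: "n > 0" and m: "m > 0" and len: "\<forall>j < m. length (xs j) = n"
    and cons: "\<forall>j < m. \<forall>k < m. xs j = xs k \<longrightarrow> ys j = ys k"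
  define S where "S = xs ` {..<m}"
  define f where "f z = ys (SOME j. j < m \<and> xs j = z)" for z
  have fS: "f (xs j) = ys j" if "j < m" for j
  proof -
    have "\<exists>k. k < m \<and> xs k = xs j" using that by blast
    then have "(SOME k. k < m \<and> xs k = xs j) < m \<and> xs (SOME k. k < m \<and> xs k = xs j) = xs j"
      by (rule someI_ex)
    then have "ys (SOME k. k < m \<and> xs k = xs j) = ys j" using cons that by blast
    then show ?thesis by (simp add: f_def)
  qed
  have "finite S" "S \<noteq> {}" "\<forall>x\<in>S. length x = n" using m len by (auto simp: S_def)
  from build[OF this n, of f] obtain c where c: "wf_circuit n c" "length c + 5 \<le> 8 * card S"
    "\<forall>x\<in>S. circuit_eval c x = f x" by blast
  have "card S \<le> m" unfolding S_def using card_image_le[of "{..<m}" xs] by simp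
  then have "length c \<le> 8 * m" using c(2) by linarith
  then show "\<exists>c. wf_circuit n c \<and> real (circuit_size c) \<le> 8 * real m \<and>
            (\<forall>j < m. circuit_eval c (xs j) = ys j)"
  proof (intro exI[of _ c] conjI allI impI)
    show "wf_circuit n c" by (rule c(1))
    show "real (circuit_size c) \<le> 8 * real m" using \<open>length c \<le> 8 * m\<close>
      unfolding circuit_size_def by simp
    fix j assume j: "j < m"
    then have "xs j \<in> S" by (simp add: S_def)
    then show "circuit_eval c (xs j) = ys j" using c(3) fS[OF j] by simp
  qed
qed (simp)

end
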